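(* Assume $0<\bar p<1$ and let $\hat{\mathcal C}=\{c\in\mathcal C:\ p_c\ge\bar p\}$. Suppose further: (i) there exist probability distributions $P_0,P_1$ on $\mathcal Y$ and a map $\lambda:\mathcal C\to[0,1]$ such that for every $c\in\mathcal C$, $P_{Y\mid C=c}=P_{\lambda(c)}:=(1-\lambda(c))P_0+\lambda(c)P_1$; set $\bar\lambda=\mathbb E[\lambda(C)]$, so that $P_Y=P_{\bar\lambda}$; (ii) (monotone alignment) for all $c_1,c_2\in S:=\{c\in\hat{\mathcal C}:\lambda(c)\ge\bar\lambda\}$, $\mathrm{IG}(Z;C=c_1)\ge\mathrm{IG}(Z;C=c_2)$ implies $\lambda(c_1)\ge\lambda(c_2)$. Then for all $c_1,c_2\in S$, $$\mathrm{IG}(Z;C=c_1)\ge\mathrm{IG}(Z;C=c_2)\implies \mathrm{IG}(Y;C=c_1)\ge\mathrm{IG}(Y;C=c_2),$$ and every maximizer of $c\mapsto\mathrm{IG}(Z;C=c)$ over $S$ is a maximizer of $c\mapsto\mathrm{IG}(Y;C=c)$ over $S$, i.e. $\operatorname*{argmax}_{c\in S}\mathrm{IG}(Z;C=c)\subseteq\operatorname*{argmax}_{c\in S}\mathrm{IG}(Y;C=c)$. In particular, if $S\neq\emptyset$ and $\mathrm{IG}(Y;C=\cdot)$ has a unique maximizer over $S$, then $\operatorname*{argmax}_{c\in S}\mathrm{IG}(Z;C=c)=\operatorname*{argmax}_{c\in S}\mathrm{IG}(Y;C=c)$.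
   Context: Let $(C,Y,Z)$ be jointly distributed random variables, where $C$ takes values in a finite set $\mathcal C$ of candidate evidences with $P(C=c)>0$ for every $c\in\mathcal C$, $Y$ takes values in a finite set $\mathcal Y$, and $Z\in\{0,1\}$ (a Bernoulli "helpfulness" variable). Write $P_{Y\mid C=c}$, $P_Y$, $P_{Z\mid C=c}$, $P_Z$ for the conditional and marginal laws. Define $p_c=P(Z=1\mid C=c)$ and $\bar p=P(Z=1)$, so $P_{Z\mid C=c}=\mathrm{Bern}(p_c)$ and $P_Z=\mathrm{Bern}(\bar p)$. For distributions $\mu,\mu'$ on a finite set, $D_{\mathrm{KL}}(\mu\|\mu')=\sum_y\mu(y)\log\frac{\mu(y)}{\mu'(y)}\in[0,\infty]$ (with $0\log 0=0$, and value $+\infty$ if $\mu$ is not absolutely continuous w.r.t. $\mu'$). The evidence-wise information gains are $\mathrm{IG}(Y;C=c)=D_{\mathrm{KL}}(P_{Y\mid C=c}\,\|\,P_Y)$ and $\mathrm{IG}(Z;C=c)=D_{\mathrm{KL}}(P_{Z\mid C=c}\,\|\,P_Z)$. $\operatorname{argmax}$ denotes the set of maximizers. *)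

theory Defs
  imports "HOL-Probability.Probability"
begin

text \<open>The joint law of (C,Y,Z) is a pmf on 'c \<times> 'y \<times> bool; Z = True means Z = 1.\<close>

definition probC :: "('c \<times> 'y \<times> bool) pmf \<Rightarrow> 'c \<Rightarrow> real" where
  "probC P c = measure_pmf.prob P {x. fst x = c}"

definition condY :: "('c \<times> 'y \<times> bool) pmf \<Rightarrow> 'c \<Rightarrow> 'y \<Rightarrow> real" where
  "condY P c y = measure_pmf.prob P {x. fst x = c \<and> fst (snd x) = y} / probC P c"

definition margY :: "('c \<times> 'y \<times> bool) pmf \<Rightarrow> 'y \<Rightarrow> real" where
  "margY P y = measure_pmf.prob P {x. fst (snd x) = y}"

definition condZ :: "('c \<times> 'y \<times> bool) pmf \<Rightarrow> 'c \<Rightarrow> bool \<Rightarrow> real" where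
  "condZ P c z = measure_pmf.prob P {x. fst x = c \<and> snd (snd x) = z} / probC P c"

definition margZ :: "('c \<times> 'y \<times> bool) pmf \<Rightarrow> bool \<Rightarrow> real" where
  "margZ P z = measure_pmf.prob P {x. snd (snd x) = z}"

definition pc :: "('c \<times> 'y \<times> bool) pmf \<Rightarrow> 'c \<Rightarrow> real" where
  "pc P c = condZ P c True"

definition pbar :: "('c \<times> 'y \<times> bool) pmf \<Rightarrow> real" where
  "pbar P = margZ P True"

definition KL :: "('a::finite \<Rightarrow> real) \<Rightarrow> ('a \<Rightarrow> real) \<Rightarrow> ereal" where
  "KL \<mu> \<mu>' = (if (\<forall>y. \<mu>' y = 0 \<longrightarrow> \<mu> y = 0)
     then ereal (\<Sum>y\<in>UNIV. if \<mu> y = 0 then 0 else \<mu> y * ln (\<mu> y / \<mu>' y))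
     else \<infinity>)"

definition IG_Y :: "('c \<times> 'y::finite \<times> bool) pmf \<Rightarrow> 'c \<Rightarrow> ereal" where
  "IG_Y P c = KL (condY P c) (margY P)"

definition IG_Z :: "('c \<times> 'y \<times> bool) pmf \<Rightarrow> 'c \<Rightarrow> ereal" where
  "IG_Z P c = KL (condZ P c) (margZ P)"

definition argmax_on :: "('a \<Rightarrow> 'b::linorder) \<Rightarrow> 'a set \<Rightarrow> 'a set" where
  "argmax_on f S = {x \<in> S. \<forall>y\<in>S. f y \<le> f x}"

end

theory Submission imports Defs begin

definition hK :: "real \<Rightarrow> real \<Rightarrow> real" where
  "hK a q = (if a = 0 then 0 else a * ln (a / q))"

lemma xlnx_convex: "convex_on {0<..} (\<lambda>t::real. t * ln t - t * ln q)"
proof (rule convex_on_realI[where f' = "\<lambda>t. ln t + 1 - ln q"])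
  show "connected {0::real<..}" by simp
  fix x :: real assume "x \<in> {0<..}"
  then show "((\<lambda>t. t * ln t - t * ln q) has_real_derivative ln x + 1 - ln q) (at x)"
    by (auto intro!: derivative_eq_intros)
next
  fix x y :: real assume "x \<in> {0<..}" "y \<in> {0<..}" "x \<le> y"
  then show "ln x + 1 - ln q \<le> ln y + 1 - ln q" by simp
qed

lemma hK_term:
  assumes q: "q \<ge> 0" and p: "p \<ge> 0" and ac: "q = 0 \<Longrightarrow> p = 0"
    and th: "0 \<le> \<theta>" "\<theta> \<le> 1"
  shows "hK (\<theta> * q + (1 - \<theta>) * p) q \<le> (1 - \<theta>) * hK p q"
proof (cases "\<theta> * q + (1 - \<theta>) * p = 0")
  case True
  show ?thesis
  proof (cases "p = 0")
    case False
    with True p q th have "(1 - \<theta>) * p = 0"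
      by (smt (verit) mult_nonneg_nonneg)
    with False have "\<theta> = 1" by simp
    then show ?thesis using True by (simp add: hK_def)
  qed (use True in \<open>simp add: hK_def\<close>)
next
  case r: False
  have qpos: "q > 0" using r ac q by fastforce
  show ?thesis
  proof (cases "p = 0")
    case True
    have "\<theta> > 0" using r True th by auto
    have "\<theta> * q * ln (\<theta> * q / q) \<le> 0"
      using qpos \<open>\<theta> > 0\<close> th by (simp add: mult_nonneg_nonpos)
    then show ?thesis using True r by (simp add: hK_def)
  next
    case False
    with p have ppos: "p > 0" by simp
    have "(\<lambda>t. t * ln t - t * ln q) ((1 - (1 - \<theta>)) *\<^sub>R q + (1 - \<theta>) *\<^sub>R p)
          \<le> (1 - (1 - \<theta>)) * (q * ln q - q * ln q) + (1 - \<theta>) * (p * ln p - p * ln q)"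
      using convex_onD[OF xlnx_convex[of q], of "1 - \<theta>" q p] qpos ppos th by simp
    moreover have "\<theta> * q + (1 - \<theta>) * p > 0"
      using r qpos ppos th by (smt (verit) mult_nonneg_nonneg)
    ultimately show ?thesis using qpos ppos r
      by (simp add: hK_def ln_div algebra_simps)
  qed
qed

lemma hK_gibbs_term:
  assumes q: "q \<ge> 0" and p: "p \<ge> 0" and ac: "q = 0 \<Longrightarrow> p = 0"
  shows "hK p q \<ge> p - q"
proof (cases "p = 0")
  case True then show ?thesis using q by (simp add: hK_def)
next
  case False
  then have pp: "p > 0" using p by simp
  then have qp: "q > 0" using ac q by fastforce
  have "ln (q / p) \<le> q / p - 1" using pp qp by (intro ln_le_minus_one) simp
  then have "ln (p / q) \<ge> 1 - q / p" using pp qp by (simp add: ln_div)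
  then have "p * ln (p / q) \<ge> p * (1 - q / p)" using pp by (intro mult_left_mono) auto
  then show ?thesis using pp False by (simp add: hK_def algebra_simps)
qed

lemma KL_eq: "KL \<mu> \<mu>' = (if (\<forall>y. \<mu>' y = 0 \<longrightarrow> \<mu> y = 0) then ereal (\<Sum>y\<in>UNIV. hK (\<mu> y) (\<mu>' y)) else \<infinity>)"
  by (simp add: KL_def hK_def)

lemma KL_mix_le:
  fixes p q :: "'a::finite \<Rightarrow> real"
  assumes p: "\<And>y. p y \<ge> 0" and q: "\<And>y. q y \<ge> 0"
    and sp: "(\<Sum>y\<in>UNIV. p y) = 1" and sq: "(\<Sum>y\<in>UNIV. q y) = 1"
    and th: "0 \<le> \<theta>" "\<theta> \<le> 1"
  shows "KL (\<lambda>y. \<theta> * q y + (1 - \<theta>) * p y) q \<le> KL p q"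
proof (cases "\<forall>y. q y = 0 \<longrightarrow> p y = 0")
  case False then show ?thesis by (auto simp add: KL_eq)
next
  case ac: True
  have ac2: "\<forall>y. q y = 0 \<longrightarrow> \<theta> * q y + (1 - \<theta>) * p y = 0" using ac by simp
  have "(\<Sum>y\<in>UNIV. hK (\<theta> * q y + (1 - \<theta>) * p y) (q y)) \<le> (\<Sum>y\<in>UNIV. (1 - \<theta>) * hK (p y) (q y))"
    by (intro sum_mono hK_term) (use p q ac th in auto)
  also have "\<dots> = (1 - \<theta>) * (\<Sum>y\<in>UNIV. hK (p y) (q y))" by (simp add: sum_distrib_left)
  also have "\<dots> \<le> (\<Sum>y\<in>UNIV. hK (p y) (q y))"
  proof -
    have "(\<Sum>y\<in>UNIV. p y - q y) \<le> (\<Sum>y\<in>UNIV. hK (p y) (q y))"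
      by (intro sum_mono hK_gibbs_term) (use p q ac in auto)
    then have "0 \<le> (\<Sum>y\<in>UNIV. hK (p y) (q y))" using sp sq by (simp add: sum_subtractf)
    then show ?thesis using th by (simp add: mult_left_le_one_le)
  qed
  finally show ?thesis using ac ac2 by (simp add: KL_eq)
qed

lemma prob_split:
  fixes P :: "('c::finite \<times> 'y::finite \<times> bool) pmf"
  shows "measure_pmf.prob P {x. R x} = (\<Sum>c\<in>UNIV. measure_pmf.prob P {x. fst x = c \<and> R x})"
proof -
  have "(\<Sum>c\<in>UNIV. measure_pmf.prob P {x. fst x = c \<and> R x})
      = (\<Sum>c\<in>UNIV. \<Sum>x\<in>{x. R x}. if fst x = c then pmf P x else 0)"
    by (intro sum.cong refl) (simp add: measure_measure_pmf_finite sum.inter_filter[symmetric] conj_commute)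
  also have "\<dots> = (\<Sum>x\<in>{x. R x}. \<Sum>c\<in>UNIV. if fst x = c then pmf P x else 0)"
    by (rule sum.swap)
  also have "\<dots> = measure_pmf.prob P {x. R x}"
    by (simp add: measure_measure_pmf_finite)
  finally show ?thesis by simp
qed


theorem theorem1:
  fixes P :: "('c::finite \<times> 'y::finite \<times> bool) pmf"
    and P0 P1 :: "'y pmf"
    and lam :: "'c \<Rightarrow> real"
  assumes posC: "\<forall>c. probC P c > 0"
    and pbar_pos: "0 < pbar P" and pbar_lt1: "pbar P < 1"
    and lam_range: "\<forall>c. 0 \<le> lam c \<and> lam c \<le> 1"
    and mixture: "\<forall>c y. condY P c y = (1 - lam c) * pmf P0 y + lam c * pmf P1 y"
    and align: "\<forall>c1 \<in> {c. pc P c \<ge> pbar P \<and> lam c \<ge> (\<Sum>c'\<in>UNIV. probC P c' * lam c')}.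
                \<forall>c2 \<in> {c. pc P c \<ge> pbar P \<and> lam c \<ge> (\<Sum>c'\<in>UNIV. probC P c' * lam c')}.
                  IG_Z P c1 \<ge> IG_Z P c2 \<longrightarrow> lam c1 \<ge> lam c2"
  shows "let S = {c. pc P c \<ge> pbar P \<and> lam c \<ge> (\<Sum>c'\<in>UNIV. probC P c' * lam c')} in
           (\<forall>c1\<in>S. \<forall>c2\<in>S. IG_Z P c1 \<ge> IG_Z P c2 \<longrightarrow> IG_Y P c1 \<ge> IG_Y P c2)
         \<and> argmax_on (IG_Z P) S \<subseteq> argmax_on (IG_Y P) S
         \<and> (S \<noteq> {} \<and> (\<exists>!c. c \<in> argmax_on (IG_Y P) S)
              \<longrightarrow> argmax_on (IG_Z P) S = argmax_on (IG_Y P) S)"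
proof -
  define Q where "Q t y = (1 - t) * pmf P0 y + t * pmf P1 y" for t y
  define lb where "lb = (\<Sum>c'\<in>UNIV. probC P c' * lam c')"
  have sumC: "(\<Sum>c\<in>UNIV. probC P c) = 1"
    using prob_split[of P "\<lambda>_. True"] by (simp add: probC_def)
  have lb0: "0 \<le> lb" unfolding lb_def using posC lam_range
    by (intro sum_nonneg mult_nonneg_nonneg) (auto intro: less_imp_le)
  have "lb \<le> (\<Sum>c\<in>UNIV. probC P c)" unfolding lb_def using posC lam_range
    by (intro sum_mono) (simp add: mult_left_le_one_le less_imp_le)
  then have lb1: "lb \<le> 1" using sumC by simp
  have condYQ: "condY P c = Q (lam c)" for c using mixture by (auto simp: Q_def)
  have margYQ: "margY P = Q lb"
  proof
    fix y
    have "margY P y = (\<Sum>c\<in>UNIV. probC P c * condY P c y)"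
      unfolding margY_def condY_def using posC prob_split[of P "\<lambda>x. fst (snd x) = y"]
      by (simp add: less_imp_neq[symmetric])
    also have "\<dots> = (\<Sum>c\<in>UNIV. probC P c * pmf P0 y + (probC P c * lam c) * (pmf P1 y - pmf P0 y))"
      by (intro sum.cong refl) (simp add: condYQ Q_def algebra_simps)
    also have "\<dots> = (\<Sum>c\<in>UNIV. probC P c) * pmf P0 y + lb * (pmf P1 y - pmf P0 y)"
      unfolding lb_def sum.distrib sum_distrib_right[symmetric] ..
    also have "\<dots> = Q lb y" by (simp add: sumC Q_def algebra_simps)
    finally show "margY P y = Q lb y" .
  qed
  have Qnn: "Q t y \<ge> 0" if "0 \<le> t" "t \<le> 1" for t y
    using that by (simp add: Q_def)
  have Qsum: "(\<Sum>y\<in>UNIV. Q t y) = 1" for t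
    by (simp add: Q_def sum.distrib sum_distrib_left[symmetric] sum_pmf_eq_1)
  have mono: "KL (Q a) (Q lb) \<le> KL (Q b) (Q lb)" if "lb \<le> a" "a \<le> b" "b \<le> 1" for a b
  proof (cases "b = lb")
    case True then have "a = b" using that by simp
    then show ?thesis by simp
  next
    case False
    then have bl: "b > lb" using that by simp
    define th where "th = (b - a) / (b - lb)"
    have th0: "0 \<le> th" and th1: "th \<le> 1" using that bl by (auto simp: th_def divide_simps)
    have eq: "(\<lambda>y. th * Q lb y + (1 - th) * Q b y) = Q a"
    proof
      fix y
      have "th * (b - lb) = b - a" using bl by (simp add: th_def)
      then have k: "th * lb + (1 - th) * b = a" by (simp add: algebra_simps)
      have "th * Q lb y + (1 - th) * Q b y = pmf P0 y + (th * lb + (1 - th) * b) * (pmf P1 y - pmf P0 y)"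
        unfolding Q_def by (simp add: algebra_simps)
      then show "th * Q lb y + (1 - th) * Q b y = Q a y"
        unfolding k by (simp add: Q_def algebra_simps)
    qed
    show ?thesis
      using KL_mix_le[of "Q b" "Q lb" th] Qnn Qsum th0 th1 that lb0 lb1 unfolding eq by simp
  qed
  define S where "S = {c. pc P c \<ge> pbar P \<and> lam c \<ge> lb}"
  have IGY: "IG_Y P c = KL (Q (lam c)) (Q lb)" for c
    by (simp add: IG_Y_def condYQ margYQ)
  have A: "\<forall>c1\<in>S. \<forall>c2\<in>S. IG_Z P c1 \<ge> IG_Z P c2 \<longrightarrow> IG_Y P c1 \<ge> IG_Y P c2"
  proof (intro ballI impI)
    fix c1 c2 assume c: "c1 \<in> S" "c2 \<in> S" "IG_Z P c1 \<ge> IG_Z P c2"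
    then have "lam c1 \<ge> lam c2" using align unfolding S_def lb_def by blast
    then show "IG_Y P c1 \<ge> IG_Y P c2" unfolding IGY
      using mono[of "lam c2" "lam c1"] c lam_range unfolding S_def by auto
  qed
  have B: "argmax_on (IG_Z P) S \<subseteq> argmax_on (IG_Y P) S"
    using A unfolding argmax_on_def by blast
  have C: "argmax_on (IG_Z P) S = argmax_on (IG_Y P) S"
    if ne: "S \<noteq> {}" and un: "\<exists>!c. c \<in> argmax_on (IG_Y P) S"
  proof -
    have "finite (IG_Z P ` S)" by simp
    then have "Max (IG_Z P ` S) \<in> IG_Z P ` S" using ne by (intro Max_in) auto
    then obtain c0 where c0: "c0 \<in> S" "IG_Z P c0 = Max (IG_Z P ` S)" by auto
    have "c0 \<in> argmax_on (IG_Z P) S" using c0 unfolding argmax_on_def by auto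
    then show ?thesis using B un by blast
  qed
  show ?thesis using A B C unfolding S_def lb_def Let_def by blast
qed

end
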